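(* Let $\mathcal{D}=(\mathcal{P},\mathcal{B},\mathcal{I})$ be a quasi-symmetric $(v,b,r,k,\lambda_1,0)$ SPBIBD of type $(k-1,t)$ with intersection numbers $x=0$ and $y>0$. Then for every block $B\in\mathcal{B}$ there exist blocks $B_1,B_2\in\mathcal{B}$, distinct from $B$, such that $|B\cap B_1|=0$ and $|B\cap B_2|=y$.
   Context: A design $\mathcal{D}=(\mathcal{P},\mathcal{B},\mathcal{I})$ is an incidence structure with $|\mathcal{P}|=v$, $|\mathcal{B}|=b$, every block incident with exactly $k$ points and every point with exactly $r$ blocks; standing assumptions: $v>k$ and $r<b$. For blocks, $B\cap B'$ denotes the set of points incident with both. $(p,B)$ is a flag if $p\in B$, a non-flag otherwise. $\mathcal{D}$ is a $(v,b,r,k,\lambda_1,\lambda_2)$ SPBIBD of type $(s,t)$ if (i) any two distinct points are together in exactly $\lambda_1$ or exactly $\lambda_2$ blocks; (ii) for every flag $(p,B)$, the number of points of $B$ other than $p$ lying with $p$ in exactly $\lambda_1$ blocks is $s$; (iii) for every non-flag $(p,B)$, the number of points of $B$ lying with $p$ in exactly $\lambda_1$ blocks is $t$. $\mathcal{D}$ is quasi-symmetric with intersection numbers $x<y$ if any two distinct blocks share exactly $x$ or $y$ points and both values occur. *)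

theory Defs
  imports Main
begin

text \<open>A design is an incidence structure (P, Bs, I): points P, blocks Bs (abstract
  objects, so repeated blocks are allowed), and incidence relation I.\<close>

definition block_pts :: "'p set \<Rightarrow> ('p \<Rightarrow> 'b \<Rightarrow> bool) \<Rightarrow> 'b \<Rightarrow> 'p set" where
  "block_pts P I B = {p \<in> P. I p B}"

definition design ::
  "'p set \<Rightarrow> 'b set \<Rightarrow> ('p \<Rightarrow> 'b \<Rightarrow> bool) \<Rightarrow> nat \<Rightarrow> nat \<Rightarrow> nat \<Rightarrow> nat \<Rightarrow> bool" where
  "design P Bs I v b r k \<longleftrightarrow>
     finite P \<and> finite Bs \<and> card P = v \<and> card Bs = b \<and>
     (\<forall>B\<in>Bs. card (block_pts P I B) = k) \<and>
     (\<forall>p\<in>P. card {B \<in> Bs. I p B} = r) \<and>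
     v > k \<and> r < b"

definition pair_count :: "'b set \<Rightarrow> ('p \<Rightarrow> 'b \<Rightarrow> bool) \<Rightarrow> 'p \<Rightarrow> 'p \<Rightarrow> nat" where
  "pair_count Bs I p q = card {B \<in> Bs. I p B \<and> I q B}"

definition SPBIBD ::
  "'p set \<Rightarrow> 'b set \<Rightarrow> ('p \<Rightarrow> 'b \<Rightarrow> bool) \<Rightarrow> nat \<Rightarrow> nat \<Rightarrow> nat \<Rightarrow> nat \<Rightarrow> nat \<Rightarrow> nat
     \<Rightarrow> nat \<Rightarrow> nat \<Rightarrow> bool" where
  "SPBIBD P Bs I v b r k l1 l2 s t \<longleftrightarrow>
     design P Bs I v b r k \<and>
     (\<forall>p\<in>P. \<forall>q\<in>P. p \<noteq> q \<longrightarrow> pair_count Bs I p q = l1 \<or> pair_count Bs I p q = l2) \<and>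
     (\<forall>p\<in>P. \<forall>B\<in>Bs. I p B \<longrightarrow>
        card {q \<in> block_pts P I B. q \<noteq> p \<and> pair_count Bs I p q = l1} = s) \<and>
     (\<forall>p\<in>P. \<forall>B\<in>Bs. \<not> I p B \<longrightarrow>
        card {q \<in> block_pts P I B. pair_count Bs I p q = l1} = t)"

definition quasi_symmetric ::
  "'p set \<Rightarrow> 'b set \<Rightarrow> ('p \<Rightarrow> 'b \<Rightarrow> bool) \<Rightarrow> nat \<Rightarrow> nat \<Rightarrow> bool" where
  "quasi_symmetric P Bs I x y \<longleftrightarrow>
     x < y \<and>
     (\<forall>B\<in>Bs. \<forall>B'\<in>Bs. B \<noteq> B' \<longrightarrow>
        card (block_pts P I B \<inter> block_pts P I B') = x \<or>
        card (block_pts P I B \<inter> block_pts P I B') = y) \<and>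
     (\<exists>B\<in>Bs. \<exists>B'\<in>Bs. B \<noteq> B' \<and> card (block_pts P I B \<inter> block_pts P I B') = x) \<and>
     (\<exists>B\<in>Bs. \<exists>B'\<in>Bs. B \<noteq> B' \<and> card (block_pts P I B \<inter> block_pts P I B') = y)"

end

theory Submission
  imports Defs
begin

lemma count_y:
  assumes des: "design P Bs I v b r k"
    and qs: "\<forall>B\<in>Bs. \<forall>B'\<in>Bs. B \<noteq> B' \<longrightarrow>
        card (block_pts P I B \<inter> block_pts P I B') = 0 \<or>
        card (block_pts P I B \<inter> block_pts P I B') = y"
    and BB: "B \<in> Bs"
  shows "y * card {B'\<in>Bs-{B}. card (block_pts P I B \<inter> block_pts P I B') = y} = k * (r - 1)"
proof -
  let ?A = "block_pts P I"
  have fP: "finite P" and fB: "finite Bs" and kk: "card (?A B) = k"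
    and rr: "\<forall>p\<in>P. card {B \<in> Bs. I p B} = r"
    using des BB unfolding design_def by auto
  have fA: "finite (?A B)" using fP unfolding block_pts_def by auto
  have int: "?A B \<inter> ?A B' = {p\<in>?A B. I p B'}" for B'
    unfolding block_pts_def by auto
  have "(\<Sum>B'\<in>Bs-{B}. card (?A B \<inter> ?A B')) = (\<Sum>B'\<in>Bs-{B}. \<Sum>p\<in>?A B. if I p B' then 1 else 0)"
    proof (rule sum.cong)
    fix B' assume "B' \<in> Bs - {B}"
    have "card {p\<in>?A B. I p B'} = (\<Sum>p\<in>?A B. if I p B' then 1 else 0)"
      using fA by (simp add: sum.If_cases Int_def)
    then show "card (?A B \<inter> ?A B') = (\<Sum>p\<in>?A B. if I p B' then 1 else 0)"
      by (simp only: int)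
  qed simp
  also have "\<dots> = (\<Sum>p\<in>?A B. \<Sum>B'\<in>Bs-{B}. if I p B' then 1 else 0)"
    by (rule sum.swap)
  also have "\<dots> = (\<Sum>p\<in>?A B. r - 1)"
  proof (rule sum.cong)
    fix p assume p: "p \<in> ?A B"
    have "(\<Sum>B'\<in>Bs-{B}. if I p B' then 1 else 0) = card {B'\<in>Bs-{B}. I p B'}"
      using fB by (simp add: sum.If_cases Int_def)
    also have "{B'\<in>Bs-{B}. I p B'} = {B'\<in>Bs. I p B'} - {B}" by auto
    also have "card \<dots> = r - 1" using p rr BB fB
      by (subst card_Diff_singleton) (auto simp: block_pts_def)
    finally show "(\<Sum>B'\<in>Bs-{B}. if I p B' then 1 else 0) = r - 1" .
  qed simp
  also have "\<dots> = k * (r - 1)" using kk by simp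
  finally have s1: "(\<Sum>B'\<in>Bs-{B}. card (?A B \<inter> ?A B')) = k * (r - 1)" .
  have "(\<Sum>B'\<in>Bs-{B}. card (?A B \<inter> ?A B')) = (\<Sum>B'\<in>Bs-{B}. if card (?A B \<inter> ?A B') = y then y else 0)"
    by (rule sum.cong) (use qs BB in auto)
  also have "\<dots> = y * card {B'\<in>Bs-{B}. card (?A B \<inter> ?A B') = y}"
    using fB by (simp add: sum.If_cases Int_def)
  finally show ?thesis using s1 by simp
qed

theorem lemma4p3:
  fixes P :: "'p set" and Bs :: "'b set" and I :: "'p \<Rightarrow> 'b \<Rightarrow> bool"
    and v b r k l1 t y :: nat
  assumes "SPBIBD P Bs I v b r k l1 0 (k - 1) t"
    and "quasi_symmetric P Bs I 0 y"
    and "y > 0"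
  shows "\<forall>B\<in>Bs. \<exists>B1\<in>Bs. \<exists>B2\<in>Bs. B1 \<noteq> B \<and> B2 \<noteq> B \<and>
           card (block_pts P I B \<inter> block_pts P I B1) = 0 \<and>
           card (block_pts P I B \<inter> block_pts P I B2) = y"
proof
  let ?A = "block_pts P I"
  let ?f = "\<lambda>B. card {B'\<in>Bs-{B}. card (?A B \<inter> ?A B') = y}"
  let ?g = "\<lambda>B. card {B'\<in>Bs-{B}. card (?A B \<inter> ?A B') = 0}"
  have des: "design P Bs I v b r k" using assms(1) unfolding SPBIBD_def by auto
  have fB: "finite Bs" using des unfolding design_def by auto
  have qs: "\<forall>B\<in>Bs. \<forall>B'\<in>Bs. B \<noteq> B' \<longrightarrow>
        card (?A B \<inter> ?A B') = 0 \<or> card (?A B \<inter> ?A B') = y"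
    using assms(2) unfolding quasi_symmetric_def by auto
  obtain B0 B0' where b0: "B0 \<in> Bs" "B0' \<in> Bs" "B0 \<noteq> B0'" "card (?A B0 \<inter> ?A B0') = 0"
    using assms(2) unfolding quasi_symmetric_def by auto
  obtain C C' where c: "C \<in> Bs" "C' \<in> Bs" "C \<noteq> C'" "card (?A C \<inter> ?A C') = y"
    using assms(2) unfolding quasi_symmetric_def by auto
  have feq: "?f B = ?f B'" if "B \<in> Bs" "B' \<in> Bs" for B B'
  proof -
    have "y * ?f B = y * ?f B'"
      using count_y[OF des qs that(1)] count_y[OF des qs that(2)] by simp
    then show ?thesis using assms(3) by simp
  qed
  have split: "?g B + ?f B = card (Bs - {B})" if "B \<in> Bs" for B
  proof -
    have "Bs - {B} = {B'\<in>Bs-{B}. card (?A B \<inter> ?A B') = 0} \<union> {B'\<in>Bs-{B}. card (?A B \<inter> ?A B') = y}"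
      using qs that by auto
    moreover have "{B'\<in>Bs-{B}. card (?A B \<inter> ?A B') = 0} \<inter> {B'\<in>Bs-{B}. card (?A B \<inter> ?A B') = y} = {}"
      using assms(3) by auto
    ultimately show ?thesis using fB by (metis (no_types, lifting) card_Un_disjoint finite_Diff finite_Un)
  qed
  fix B assume B: "B \<in> Bs"
  have "?g B0 > 0" using b0 fB by (subst card_gt_0_iff) auto
  moreover have "?g B = ?g B0" using split[OF B] split[OF b0(1)] feq[OF B b0(1)]
    B b0(1) fB by (simp add: card_Diff_singleton)
  ultimately have "{B'\<in>Bs-{B}. card (?A B \<inter> ?A B') = 0} \<noteq> {}"
    by (metis (no_types, lifting) card.empty less_irrefl)
  then obtain B1 where B1: "B1 \<in> Bs" "B1 \<noteq> B" "card (?A B \<inter> ?A B1) = 0" by auto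
  have "?f C > 0" using c fB by (subst card_gt_0_iff) auto
  then have "?f B > 0" using feq[OF B c(1)] by simp
  then have "{B'\<in>Bs-{B}. card (?A B \<inter> ?A B') = y} \<noteq> {}"
    by (metis (no_types, lifting) card.empty less_irrefl)
  then obtain B2 where B2: "B2 \<in> Bs" "B2 \<noteq> B" "card (?A B \<inter> ?A B2) = y" by auto
  show "\<exists>B1\<in>Bs. \<exists>B2\<in>Bs. B1 \<noteq> B \<and> B2 \<noteq> B \<and>
           card (?A B \<inter> ?A B1) = 0 \<and> card (?A B \<inter> ?A B2) = y"
    using B1 B2 by blast
qed

end
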